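(* Let $(R,\mathfrak{m})$ be a local ring and $\mathcal{X}$ a resolving subcategory of $\operatorname{mod} R$. If $\operatorname{radius}\mathcal{X}<\infty$, then $\sup_{X\in\mathcal{X}}\{\ell\ell(\Gamma_\mathfrak{m}(X))\}<\infty$.
   Context: All modules are finitely generated; $\operatorname{mod} R$ is the category of finitely generated $R$-modules; subcategories are full and closed under isomorphism. A subcategory is resolving if it contains the projective modules and is closed under direct summands, extensions, and kernels of epimorphisms. $\Gamma_\mathfrak{m}(X)$ is the submodule of elements of $X$ annihilated by some power of $\mathfrak{m}$; $\ell\ell(N)$ (Loewy length) is the infimum of $n\ge0$ with $\mathfrak{m}^nN=0$. Radius: $\Omega^iX$ is the $i$-th syzygy in the minimal free resolution, $\Omega^0X=X$; $[\mathcal{X}]$ is the additive closure (direct summands of finite direct sums) of the subcategory consisting of $R$ and all $\Omega^iX$, $i\ge0$, $X\in\mathcal{X}$; $\mathcal{X}\circ\mathcal{Y}$ consists of modules $M$ with an exact sequence $0\to X\to M\to Y\to0$, $X\in\mathcal{X}$, $Y\in\mathcal{Y}$; $[C]_1=[C]$, $[C]_r=[[C]_{r-1}\circ[C]]$; the radius of $\mathcal{X}$ is the infimum of $n\ge0$ with $\mathcal{X}\subseteq[C]_{n+1}$ for some $C\in\operatorname{mod} R$. *)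

theory Defs
  imports "HOL-Algebra.Ring_Divisibility" "HOL-Algebra.Ideal" "HOL-Algebra.Module" "HOL-Library.Extended_Nat"
begin

definition local_ring :: "'a ring \<Rightarrow> bool" where
  "local_ring R \<longleftrightarrow> cring R \<and> noetherian_ring R \<and> (\<exists>!I. maximalideal I R)"

definition max_ideal :: "'a ring \<Rightarrow> 'a set" where
  "max_ideal R = (THE I. maximalideal I R)"

text \<open>Every finitely generated R-module is isomorphic to one whose elements are
  cosets of a submodule of R^n, i.e. sets of lists; so modules with carrier in
  the type 'a list set form a universe containing a copy of every object of mod R.\<close>

type_synonym 'a umod = "('a, 'a list set) module"

definition modhom :: "'a ring \<Rightarrow> ('a, 'b, 'c) module_scheme \<Rightarrow> ('a, 'd, 'e) module_scheme
    \<Rightarrow> ('b \<Rightarrow> 'd) \<Rightarrow> bool" where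
  "modhom R M N f \<longleftrightarrow> f \<in> carrier M \<rightarrow> carrier N
     \<and> (\<forall>x\<in>carrier M. \<forall>y\<in>carrier M. f (x \<oplus>\<^bsub>M\<^esub> y) = f x \<oplus>\<^bsub>N\<^esub> f y)
     \<and> (\<forall>a\<in>carrier R. \<forall>x\<in>carrier M. f (a \<odot>\<^bsub>M\<^esub> x) = a \<odot>\<^bsub>N\<^esub> f x)"

definition mod_iso :: "'a ring \<Rightarrow> ('a, 'b, 'c) module_scheme \<Rightarrow> ('a, 'd, 'e) module_scheme \<Rightarrow> bool" where
  "mod_iso R M N \<longleftrightarrow> (\<exists>f. modhom R M N f \<and> bij_betw f (carrier M) (carrier N))"

definition fg_mod :: "'a ring \<Rightarrow> ('a, 'b) module \<Rightarrow> bool" where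
  "fg_mod R M \<longleftrightarrow> module R M \<and>
     (\<exists>xs. set xs \<subseteq> carrier M \<and> (\<forall>m\<in>carrier M. \<exists>cs. length cs = length xs \<and> set cs \<subseteq> carrier R
        \<and> m = finsum M (\<lambda>i. (cs ! i) \<odot>\<^bsub>M\<^esub> (xs ! i)) {..<length xs}))"

definition free_mod :: "'a ring \<Rightarrow> nat \<Rightarrow> ('a, 'a list) module" where
  "free_mod R n = \<lparr>carrier = {xs. length xs = n \<and> set xs \<subseteq> carrier R},
     mult = (\<lambda>xs ys. map2 (\<lambda>x y. x \<otimes>\<^bsub>R\<^esub> y) xs ys), one = replicate n \<one>\<^bsub>R\<^esub>,
     zero = replicate n \<zero>\<^bsub>R\<^esub>, add = (\<lambda>xs ys. map2 (\<lambda>x y. x \<oplus>\<^bsub>R\<^esub> y) xs ys),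
     smult = (\<lambda>a xs. map (\<lambda>x. a \<otimes>\<^bsub>R\<^esub> x) xs)\<rparr>"

definition kernel_mod :: "('a, 'b) module \<Rightarrow> ('a, 'd, 'e) module_scheme \<Rightarrow> ('b \<Rightarrow> 'd) \<Rightarrow> ('a, 'b) module" where
  "kernel_mod M N g = M\<lparr>carrier := {x \<in> carrier M. g x = \<zero>\<^bsub>N\<^esub>}\<rparr>"

definition short_exact :: "'a ring \<Rightarrow> ('a, 'b) module \<Rightarrow> ('a, 'c) module \<Rightarrow> ('a, 'd) module
    \<Rightarrow> ('b \<Rightarrow> 'c) \<Rightarrow> ('c \<Rightarrow> 'd) \<Rightarrow> bool" where
  "short_exact R X M Y f g \<longleftrightarrow> modhom R X M f \<and> modhom R M Y g \<and> inj_on f (carrier X)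
     \<and> g ` carrier M = carrier Y \<and> f ` carrier X = {x \<in> carrier M. g x = \<zero>\<^bsub>Y\<^esub>}"

definition direct_summand :: "'a ring \<Rightarrow> ('a, 'b) module \<Rightarrow> ('a, 'c) module \<Rightarrow> bool" where
  "direct_summand R M X \<longleftrightarrow> (\<exists>i p. modhom R M X i \<and> modhom R X M p \<and> (\<forall>x\<in>carrier M. p (i x) = x))"

definition projective_mod :: "'a ring \<Rightarrow> 'a umod \<Rightarrow> bool" where
  "projective_mod R P \<longleftrightarrow> fg_mod R P \<and>
     (\<forall>(A::'a umod) (B::'a umod) g h. fg_mod R A \<and> fg_mod R B \<and> modhom R A B g
        \<and> g ` carrier A = carrier B \<and> modhom R P B h
        \<longrightarrow> (\<exists>h'. modhom R P A h' \<and> (\<forall>x\<in>carrier P. g (h' x) = h x)))"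

definition resolving :: "'a ring \<Rightarrow> 'a umod set \<Rightarrow> bool" where
  "resolving R \<X> \<longleftrightarrow>
     \<X> \<subseteq> {M. fg_mod R M}
   \<and> (\<forall>M N. M \<in> \<X> \<and> fg_mod R N \<and> mod_iso R N M \<longrightarrow> N \<in> \<X>)
   \<and> (\<forall>P. projective_mod R P \<longrightarrow> P \<in> \<X>)
   \<and> (\<forall>M X. X \<in> \<X> \<and> fg_mod R M \<and> direct_summand R M X \<longrightarrow> M \<in> \<X>)
   \<and> (\<forall>X M Y f g. X \<in> \<X> \<and> Y \<in> \<X> \<and> fg_mod R M \<and> short_exact R X M Y f g \<longrightarrow> M \<in> \<X>)
   \<and> (\<forall>X M Y f g. M \<in> \<X> \<and> Y \<in> \<X> \<and> fg_mod R X \<and> short_exact R X M Y f g \<longrightarrow> X \<in> \<X>)"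

definition num_gens :: "'a ring \<Rightarrow> ('a, 'b) module \<Rightarrow> nat" where
  "num_gens R M = (LEAST n. \<exists>g. modhom R (free_mod R n) M g \<and> g ` carrier (free_mod R n) = carrier M)"

definition syz1 :: "'a ring \<Rightarrow> ('a, 'b) module \<Rightarrow> ('a, 'c) module \<Rightarrow> bool" where
  "syz1 R Z N \<longleftrightarrow> (\<exists>g. modhom R (free_mod R (num_gens R Z)) Z g
      \<and> g ` carrier (free_mod R (num_gens R Z)) = carrier Z
      \<and> mod_iso R N (kernel_mod (free_mod R (num_gens R Z)) Z g))"

text \<open>syz R i X N: N is isomorphic to the i-th syzygy of X (Omega^0 X = X).\<close>
fun syz :: "'a ring \<Rightarrow> nat \<Rightarrow> 'a umod \<Rightarrow> 'a umod \<Rightarrow> bool" where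
  "syz R 0 X N = (fg_mod R N \<and> mod_iso R N X)"
| "syz R (Suc i) X N = (fg_mod R N \<and> (\<exists>Z. syz R i X Z \<and> syz1 R Z N))"

text \<open>Additive closure: direct summands of finite direct sums of members of S
  (M is a summand of N_0 + ... + N_(n-1) with inclusion/projection components).\<close>
definition add_closure :: "'a ring \<Rightarrow> 'a umod set \<Rightarrow> 'a umod set" where
  "add_closure R S = {M. fg_mod R M \<and> (\<exists>(n::nat) (N::nat \<Rightarrow> 'a umod) \<iota> \<pi>.
      (\<forall>k<n. N k \<in> S \<and> modhom R M (N k) (\<iota> k) \<and> modhom R (N k) M (\<pi> k))
    \<and> (\<forall>x\<in>carrier M. finsum M (\<lambda>k. \<pi> k (\<iota> k x)) {..<n} = x))}"

definition bracket :: "'a ring \<Rightarrow> 'a umod set \<Rightarrow> 'a umod set" where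
  "bracket R \<X> = add_closure R
     ({N. fg_mod R N \<and> mod_iso R N (free_mod R 1)} \<union> {N. \<exists>i X. X \<in> \<X> \<and> syz R i X N})"

definition circ :: "'a ring \<Rightarrow> 'a umod set \<Rightarrow> 'a umod set \<Rightarrow> 'a umod set" where
  "circ R \<X> \<Y> = {M. fg_mod R M \<and> (\<exists>X\<in>\<X>. \<exists>Y\<in>\<Y>. \<exists>f g. short_exact R X M Y f g)}"

text \<open>ball R C r = [C]_(r+1).\<close>
fun ball :: "'a ring \<Rightarrow> 'a umod \<Rightarrow> nat \<Rightarrow> 'a umod set" where
  "ball R C 0 = bracket R {C}"
| "ball R C (Suc r) = bracket R (circ R (ball R C r) (bracket R {C}))"

definition radius :: "'a ring \<Rightarrow> 'a umod set \<Rightarrow> enat" where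
  "radius R \<X> = (INF n \<in> {n. \<exists>C. fg_mod R C \<and> \<X> \<subseteq> ball R C n}. enat n)"

text \<open>m^n x = 0: all products of n elements of m kill x.\<close>
definition ann_pow :: "'a ring \<Rightarrow> ('a, 'b) module \<Rightarrow> nat \<Rightarrow> 'b \<Rightarrow> bool" where
  "ann_pow R M n x \<longleftrightarrow> (\<forall>as. length as = n \<and> set as \<subseteq> max_ideal R
      \<longrightarrow> (foldr (\<otimes>\<^bsub>R\<^esub>) as \<one>\<^bsub>R\<^esub>) \<odot>\<^bsub>M\<^esub> x = \<zero>\<^bsub>M\<^esub>)"

definition gamma_m :: "'a ring \<Rightarrow> ('a, 'b) module \<Rightarrow> 'b set" where
  "gamma_m R M = {x \<in> carrier M. \<exists>n. ann_pow R M n x}"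

definition loewy_length :: "'a ring \<Rightarrow> ('a, 'b) module \<Rightarrow> 'b set \<Rightarrow> enat" where
  "loewy_length R M N = (INF n \<in> {n. \<forall>x\<in>N. ann_pow R M n x}. enat n)"

end

theory Submission
  imports Defs
begin


definition lprod :: "'a ring \<Rightarrow> 'a list \<Rightarrow> 'a" where
  "lprod R as = foldr (\<otimes>\<^bsub>R\<^esub>) as \<one>\<^bsub>R\<^esub>"

lemma lprod_closed: "ring R \<Longrightarrow> set as \<subseteq> carrier R \<Longrightarrow> lprod R as \<in> carrier R"
  by (induction as) (auto simp: lprod_def ring.ring_simprules)

lemma lprod_append: "ring R \<Longrightarrow> set as \<subseteq> carrier R \<Longrightarrow> set bs \<subseteq> carrier R \<Longrightarrow>
   lprod R (as @ bs) = lprod R as \<otimes>\<^bsub>R\<^esub> lprod R bs"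
proof (induction as)
  case Nil then show ?case by (simp add: lprod_def ring.ring_simprules lprod_closed[unfolded lprod_def])
next
  case (Cons a as)
  then show ?case using lprod_closed[of R as] lprod_closed[of R bs]
    by (simp add: lprod_def ring.ring_simprules(11))
qed

lemma ann_pow_lprod: "ann_pow R M n x \<longleftrightarrow> (\<forall>as. length as = n \<and> set as \<subseteq> max_ideal R
      \<longrightarrow> lprod R as \<odot>\<^bsub>M\<^esub> x = \<zero>\<^bsub>M\<^esub>)"
  by (simp add: ann_pow_def lprod_def)

lemma local_max_ideal: assumes "local_ring R" shows "maximalideal (max_ideal R) R"
proof -
  from assms have "\<exists>!I. maximalideal I R" by (simp add: local_ring_def)
  then show ?thesis unfolding max_ideal_def by (rule theI')
qed

lemma local_max_ideal_ideal: "local_ring R \<Longrightarrow> ideal (max_ideal R) R"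
  using local_max_ideal maximalideal.axioms(1) by blast

lemma local_max_sub: "local_ring R \<Longrightarrow> max_ideal R \<subseteq> carrier R"
  using local_max_ideal_ideal ideal.axioms(1) additive_subgroup.a_subset by blast

lemma ann_pow_mono:
  assumes M: "module R M" and sub: "max_ideal R \<subseteq> carrier R" and x: "x \<in> carrier M"
    and a: "ann_pow R M k x" and kj: "k \<le> j"
  shows "ann_pow R M j x"
  unfolding ann_pow_lprod
proof (intro allI impI)
  interpret module R M by fact
  fix as assume as: "length as = j \<and> set as \<subseteq> max_ideal R"
  define bs where "bs = take (j - k) as"
  define cs where "cs = drop (j - k) as"
  have asd: "as = bs @ cs" by (simp add: bs_def cs_def)
  have bsc: "set bs \<subseteq> carrier R" "set cs \<subseteq> carrier R"
    using as sub asd by auto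
  have "length cs = k" "set cs \<subseteq> max_ideal R" using as kj unfolding cs_def by (auto dest: in_set_dropD)
  then have c0: "lprod R cs \<odot>\<^bsub>M\<^esub> x = \<zero>\<^bsub>M\<^esub>" using a by (simp add: ann_pow_lprod)
  have "lprod R as \<odot>\<^bsub>M\<^esub> x = lprod R bs \<odot>\<^bsub>M\<^esub> (lprod R cs \<odot>\<^bsub>M\<^esub> x)"
    using asd lprod_append[OF ring_axioms bsc] lprod_closed[OF ring_axioms] bsc x
    by (simp add: smult_assoc1)
  then show "lprod R as \<odot>\<^bsub>M\<^esub> x = \<zero>\<^bsub>M\<^esub>" using c0 lprod_closed[OF ring_axioms] bsc by simp
qed




definition bnd :: "'a ring \<Rightarrow> ('a,'b) module \<Rightarrow> nat \<Rightarrow> bool" where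
  "bnd R M b \<longleftrightarrow> (\<forall>x\<in>gamma_m R M. ann_pow R M b x)"

lemma modhom_zero:
  assumes M: "module R M" and N: "module R N" and f: "modhom R M N f"
  shows "f \<zero>\<^bsub>M\<^esub> = \<zero>\<^bsub>N\<^esub>"
proof -
  interpret M: module R M by fact
  interpret N: module R N by fact
  have "f \<zero>\<^bsub>M\<^esub> = f (\<zero>\<^bsub>R\<^esub> \<odot>\<^bsub>M\<^esub> \<zero>\<^bsub>M\<^esub>)" by simp
  also have "\<dots> = \<zero>\<^bsub>R\<^esub> \<odot>\<^bsub>N\<^esub> f \<zero>\<^bsub>M\<^esub>" using f unfolding modhom_def proof -
    have "\<zero>\<^bsub>R\<^esub> \<in> carrier R" "\<zero>\<^bsub>M\<^esub> \<in> carrier M" by simp_all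
    then show ?thesis using f unfolding modhom_def by blast
  qed
  also have "\<dots> = \<zero>\<^bsub>N\<^esub>" using f unfolding modhom_def by (simp add: Pi_iff)
  finally show ?thesis .
qed

lemma modhom_zero_free:
  assumes M: "module R M" and f: "modhom R M (free_mod R n) f"
  shows "f \<zero>\<^bsub>M\<^esub> = \<zero>\<^bsub>free_mod R n\<^esub>"
proof -
  interpret M: module R M by fact
  have c: "f \<zero>\<^bsub>M\<^esub> \<in> carrier (free_mod R n)" using f unfolding modhom_def by (simp add: Pi_iff)
  have "f \<zero>\<^bsub>M\<^esub> = f (\<zero>\<^bsub>R\<^esub> \<odot>\<^bsub>M\<^esub> \<zero>\<^bsub>M\<^esub>)" by simp
  also have "\<dots> = \<zero>\<^bsub>R\<^esub> \<odot>\<^bsub>free_mod R n\<^esub> f \<zero>\<^bsub>M\<^esub>" using f unfolding modhom_def proof -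
    have "\<zero>\<^bsub>R\<^esub> \<in> carrier R" "\<zero>\<^bsub>M\<^esub> \<in> carrier M" by simp_all
    then show ?thesis using f unfolding modhom_def by blast
  qed
  also have "\<dots> = \<zero>\<^bsub>free_mod R n\<^esub>"
  proof -
    have "\<forall>i<length (f \<zero>\<^bsub>M\<^esub>). f \<zero>\<^bsub>M\<^esub> ! i \<in> carrier R"
      using c by (auto simp: free_mod_def)
    then show ?thesis using c
      by (auto simp: free_mod_def list_eq_iff_nth_eq)
  qed
  finally show ?thesis .
qed

lemma bnd_transfer:
  assumes M: "module R M" and sub: "max_ideal R \<subseteq> carrier R"
    and f: "modhom R M N f" and inj: "inj_on f (carrier M)" and z: "f \<zero>\<^bsub>M\<^esub> = \<zero>\<^bsub>N\<^esub>"
    and b: "bnd R N b"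
  shows "bnd R M b"
  unfolding bnd_def
proof
  interpret M: module R M by fact
  fix x assume x: "x \<in> gamma_m R M"
  then obtain k where xc: "x \<in> carrier M" and k: "ann_pow R M k x" by (auto simp: gamma_m_def)
  have fx: "f x \<in> carrier N" using f xc unfolding modhom_def by auto
  have pc: "set as \<subseteq> max_ideal R \<Longrightarrow> lprod R as \<in> carrier R" for as
    using lprod_closed[OF M.ring_axioms] sub by blast
  have hom: "p \<in> carrier R \<Longrightarrow> f (p \<odot>\<^bsub>M\<^esub> x) = p \<odot>\<^bsub>N\<^esub> f x" for p
    using f xc unfolding modhom_def by auto
  have "ann_pow R N k (f x)" unfolding ann_pow_lprod
    using k hom pc z unfolding ann_pow_lprod by metis
  then have "f x \<in> gamma_m R N" using fx by (auto simp: gamma_m_def)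
  then have bx: "ann_pow R N b (f x)" using b by (auto simp: bnd_def)
  show "ann_pow R M b x" unfolding ann_pow_lprod
  proof (intro allI impI)
    fix as assume as: "length as = b \<and> set as \<subseteq> max_ideal R"
    then have "f (lprod R as \<odot>\<^bsub>M\<^esub> x) = f \<zero>\<^bsub>M\<^esub>" using bx hom pc z unfolding ann_pow_lprod by metis
    then show "lprod R as \<odot>\<^bsub>M\<^esub> x = \<zero>\<^bsub>M\<^esub>"
      using inj pc as xc by (auto dest: inj_onD)
  qed
qed

definition rann :: "'a ring \<Rightarrow> nat \<Rightarrow> 'a \<Rightarrow> bool" where
  "rann R k r \<longleftrightarrow> (\<forall>as. length as = k \<and> set as \<subseteq> max_ideal R \<longrightarrow> lprod R as \<otimes>\<^bsub>R\<^esub> r = \<zero>\<^bsub>R\<^esub>)"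

lemma free_bnd:
  assumes b0: "\<And>k r. r \<in> carrier R \<Longrightarrow> rann R k r \<Longrightarrow> rann R b0 r"
  shows "bnd R (free_mod R n) b0"
  unfolding bnd_def
proof
  fix x assume x: "x \<in> gamma_m R (free_mod R n)"
  then obtain k where xc: "x \<in> carrier (free_mod R n)" and k: "ann_pow R (free_mod R n) k x"
    by (auto simp: gamma_m_def)
  have len: "length x = n" and xs: "set x \<subseteq> carrier R" using xc by (auto simp: free_mod_def)
  have "rann R k (x ! i)" if i: "i < n" for i
    unfolding rann_def
  proof (intro allI impI)
    fix as assume "length as = k \<and> set as \<subseteq> max_ideal R"
    then have "map (\<lambda>y. lprod R as \<otimes>\<^bsub>R\<^esub> y) x = replicate n \<zero>\<^bsub>R\<^esub>"
      using k unfolding ann_pow_lprod by (simp add: free_mod_def)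
    then show "lprod R as \<otimes>\<^bsub>R\<^esub> (x ! i) = \<zero>\<^bsub>R\<^esub>"
      using i len by (metis nth_map nth_replicate)
  qed
  then have r: "i < n \<Longrightarrow> rann R b0 (x ! i)" for i using b0 xs len by (meson nth_mem subsetD)
  show "ann_pow R (free_mod R n) b0 x" unfolding ann_pow_lprod
  proof (intro allI impI)
    fix as assume as: "length as = b0 \<and> set as \<subseteq> max_ideal R"
    have "map (\<lambda>y. lprod R as \<otimes>\<^bsub>R\<^esub> y) x = replicate n \<zero>\<^bsub>R\<^esub>"
      using r as len unfolding rann_def by (auto simp: list_eq_iff_nth_eq)
    then show "lprod R as \<odot>\<^bsub>free_mod R n\<^esub> x = \<zero>\<^bsub>free_mod R n\<^esub>" by (simp add: free_mod_def)
  qed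
qed




lemma lprod_mem: "ring R \<Longrightarrow> max_ideal R \<subseteq> carrier R \<Longrightarrow> set as \<subseteq> max_ideal R \<Longrightarrow> lprod R as \<in> carrier R"
  using lprod_closed by blast

lemma ann_pow_hom:
  assumes M: "module R M" and sub: "max_ideal R \<subseteq> carrier R" and f: "modhom R M N f"
    and z: "f \<zero>\<^bsub>M\<^esub> = \<zero>\<^bsub>N\<^esub>" and x: "x \<in> carrier M" and a: "ann_pow R M k x"
  shows "ann_pow R N k (f x)"
proof -
  interpret M: module R M by fact
  show ?thesis unfolding ann_pow_lprod
  proof (intro allI impI)
    fix as assume as: "length as = k \<and> set as \<subseteq> max_ideal R"
    then have p: "lprod R as \<in> carrier R" using lprod_mem[OF M.ring_axioms sub] by blast
    have "lprod R as \<odot>\<^bsub>N\<^esub> f x = f (lprod R as \<odot>\<^bsub>M\<^esub> x)" using f p x unfolding modhom_def by auto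
    also have "\<dots> = \<zero>\<^bsub>N\<^esub>" using a as z unfolding ann_pow_lprod by simp
    finally show "lprod R as \<odot>\<^bsub>N\<^esub> f x = \<zero>\<^bsub>N\<^esub>" .
  qed
qed

lemma gamma_hom:
  assumes M: "module R M" and sub: "max_ideal R \<subseteq> carrier R" and f: "modhom R M N f"
    and z: "f \<zero>\<^bsub>M\<^esub> = \<zero>\<^bsub>N\<^esub>" and x: "x \<in> gamma_m R M"
  shows "f x \<in> gamma_m R N"
  using x ann_pow_hom[OF M sub f z] f unfolding gamma_m_def modhom_def by auto

lemma bnd_summand:
  assumes M: "module R M" and sub: "max_ideal R \<subseteq> carrier R"
    and N: "\<And>k. k < n \<Longrightarrow> module R (N k) \<and> bnd R (N k) b \<and> modhom R M (N k) (\<iota> k) \<and> modhom R (N k) M (\<pi> k)"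
    and s: "\<forall>x\<in>carrier M. finsum M (\<lambda>k. \<pi> k (\<iota> k x)) {..<n} = x"
  shows "bnd R M b"
  unfolding bnd_def
proof
  interpret M: module R M by fact
  fix x assume x: "x \<in> gamma_m R M"
  then have xc: "x \<in> carrier M" by (simp add: gamma_m_def)
  have ib: "ann_pow R (N j) b (\<iota> j x)" if j: "j < n" for j
  proof -
    have h: "modhom R M (N j) (\<iota> j)" and Nj: "module R (N j)" using N[OF j] by auto
    have "\<iota> j x \<in> gamma_m R (N j)"
      using gamma_hom[OF M sub h modhom_zero[OF M Nj h] x] .
    then show ?thesis using N[OF j] unfolding bnd_def by blast
  qed
  show "ann_pow R M b x" unfolding ann_pow_lprod
  proof (intro allI impI)
    fix as assume as: "length as = b \<and> set as \<subseteq> max_ideal R"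
    then have p: "lprod R as \<in> carrier R" using lprod_mem[OF M.ring_axioms sub] by blast
    have px: "lprod R as \<odot>\<^bsub>M\<^esub> x \<in> carrier M" using p xc by simp
    have eq: "\<pi> j (\<iota> j (lprod R as \<odot>\<^bsub>M\<^esub> x)) = \<zero>\<^bsub>M\<^esub>" if j: "j < n" for j
    proof -
      have "\<iota> j (lprod R as \<odot>\<^bsub>M\<^esub> x) = lprod R as \<odot>\<^bsub>N j\<^esub> \<iota> j x"
        using N[OF j] p xc unfolding modhom_def by auto
      also have "\<dots> = \<zero>\<^bsub>N j\<^esub>" using ib[OF j] as unfolding ann_pow_lprod by simp
      finally show ?thesis using modhom_zero[of R "N j" M "\<pi> j"] N[OF j] M by simp
    qed
    have "lprod R as \<odot>\<^bsub>M\<^esub> x = finsum M (\<lambda>j. \<pi> j (\<iota> j (lprod R as \<odot>\<^bsub>M\<^esub> x))) {..<n}"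
      using s px by simp
    also have "\<dots> = finsum M (\<lambda>j. \<zero>\<^bsub>M\<^esub>) {..<n}"
      by (rule M.finsum_cong') (auto simp: eq)
    also have "\<dots> = \<zero>\<^bsub>M\<^esub>" by simp
    finally show "lprod R as \<odot>\<^bsub>M\<^esub> x = \<zero>\<^bsub>M\<^esub>" .
  qed
qed




lemma bnd_ext:
  assumes X: "module R X" and M: "module R M" and Y: "module R Y" and sub: "max_ideal R \<subseteq> carrier R"
    and se: "short_exact R X M Y f g" and bX: "bnd R X b1" and bY: "bnd R Y b2"
  shows "bnd R M (b1 + b2)"
  unfolding bnd_def
proof
  interpret M: module R M by fact
  interpret X: module R X by fact
  have f: "modhom R X M f" and g: "modhom R M Y g" and inj: "inj_on f (carrier X)"
    and ker: "f ` carrier X = {x \<in> carrier M. g x = \<zero>\<^bsub>Y\<^esub>}" using se by (auto simp: short_exact_def)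
  have fz: "f \<zero>\<^bsub>X\<^esub> = \<zero>\<^bsub>M\<^esub>" by (rule modhom_zero[OF X M f])
  have gz: "g \<zero>\<^bsub>M\<^esub> = \<zero>\<^bsub>Y\<^esub>" by (rule modhom_zero[OF M Y g])
  have pc: "set as \<subseteq> max_ideal R \<Longrightarrow> lprod R as \<in> carrier R" for as
    using lprod_mem[OF M.ring_axioms sub] by blast
  fix x assume x: "x \<in> gamma_m R M"
  then obtain k where xc: "x \<in> carrier M" and k: "ann_pow R M k x" by (auto simp: gamma_m_def)
  have gx: "g x \<in> gamma_m R Y" by (rule gamma_hom[OF M sub g gz x])
  then have gb: "ann_pow R Y b2 (g x)" using bY by (simp add: bnd_def)
  show "ann_pow R M (b1 + b2) x" unfolding ann_pow_lprod
  proof (intro allI impI)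
    fix as assume as: "length as = b1 + b2 \<and> set as \<subseteq> max_ideal R"
    define bs where "bs = take b1 as"
    define cs where "cs = drop b1 as"
    have asd: "as = bs @ cs" by (simp add: bs_def cs_def)
    have bsm: "set bs \<subseteq> max_ideal R" "length bs = b1" using as unfolding bs_def by (auto dest: in_set_takeD)
    have csm: "set cs \<subseteq> max_ideal R" "length cs = b2" using as unfolding cs_def by (auto dest: in_set_dropD)
    have bsc: "set bs \<subseteq> carrier R" "set cs \<subseteq> carrier R" using bsm csm sub by auto
    let ?p = "lprod R cs"
    have p2: "?p \<in> carrier R" using pc csm by blast
    have p1: "lprod R bs \<in> carrier R" using pc bsm by blast
    have "g (?p \<odot>\<^bsub>M\<^esub> x) = ?p \<odot>\<^bsub>Y\<^esub> g x" using g p2 xc unfolding modhom_def by auto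
    also have "\<dots> = \<zero>\<^bsub>Y\<^esub>" using gb csm unfolding ann_pow_lprod by simp
    finally have "?p \<odot>\<^bsub>M\<^esub> x \<in> f ` carrier X" using ker p2 xc by simp
    then obtain y where yc: "y \<in> carrier X" and fy: "f y = ?p \<odot>\<^bsub>M\<^esub> x" by (metis imageE)
    have "ann_pow R X k y" unfolding ann_pow_lprod
    proof (intro allI impI)
      fix ds assume ds: "length ds = k \<and> set ds \<subseteq> max_ideal R"
      have dc: "set ds \<subseteq> carrier R" using ds sub by auto
      have kk: "ann_pow R M (k + b2) x" by (rule ann_pow_mono[OF M sub xc k]) simp
      have "f (lprod R ds \<odot>\<^bsub>X\<^esub> y) = lprod R ds \<odot>\<^bsub>M\<^esub> f y" using f pc ds yc unfolding modhom_def by auto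
      also have "\<dots> = lprod R (ds @ cs) \<odot>\<^bsub>M\<^esub> x"
        using fy lprod_append[OF M.ring_axioms dc bsc(2)] pc ds p2 xc by (simp add: M.smult_assoc1)
      also have "\<dots> = \<zero>\<^bsub>M\<^esub>" using kk ds csm unfolding ann_pow_lprod by simp
      finally have "f (lprod R ds \<odot>\<^bsub>X\<^esub> y) = f \<zero>\<^bsub>X\<^esub>" by (simp only: fz)
      moreover have "lprod R ds \<odot>\<^bsub>X\<^esub> y \<in> carrier X" using pc ds yc by simp
      ultimately show "lprod R ds \<odot>\<^bsub>X\<^esub> y = \<zero>\<^bsub>X\<^esub>"
        using inj_onD[OF inj] by simp
    qed
    then have "y \<in> gamma_m R X" using yc by (auto simp: gamma_m_def)
    then have "ann_pow R X b1 y" using bX unfolding bnd_def by blast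
    then have y0: "lprod R bs \<odot>\<^bsub>X\<^esub> y = \<zero>\<^bsub>X\<^esub>" using bsm unfolding ann_pow_lprod by simp
    have "lprod R as \<odot>\<^bsub>M\<^esub> x = lprod R bs \<odot>\<^bsub>M\<^esub> (?p \<odot>\<^bsub>M\<^esub> x)"
      using asd lprod_append[OF M.ring_axioms bsc] p1 p2 xc by (simp add: M.smult_assoc1)
    also have "\<dots> = f (lprod R bs \<odot>\<^bsub>X\<^esub> y)" using fy f p1 yc unfolding modhom_def by auto
    also have "\<dots> = \<zero>\<^bsub>M\<^esub>" using y0 fz by simp
    finally show "lprod R as \<odot>\<^bsub>M\<^esub> x = \<zero>\<^bsub>M\<^esub>" .
  qed
qed




lemma ideal_closure:
  fixes R :: "'a ring" (structure)
  assumes R: "cring R" and s: "I \<subseteq> carrier R" and z: "\<zero>\<^bsub>R\<^esub> \<in> I"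
    and a: "\<And>a b. a \<in> I \<Longrightarrow> b \<in> I \<Longrightarrow> a \<oplus>\<^bsub>R\<^esub> b \<in> I"
    and m: "\<And>r a. r \<in> carrier R \<Longrightarrow> a \<in> I \<Longrightarrow> r \<otimes>\<^bsub>R\<^esub> a \<in> I"
  shows "ideal I R"
proof -
  interpret cring R by fact
  have neg: "\<ominus> x \<in> I" if "x \<in> I" for x
  proof -
    have "\<ominus> x = (\<ominus> \<one>) \<otimes> x" using that s by (simp add: l_minus subsetD)
    then show ?thesis using m[of "\<ominus> \<one>" x] that by simp
  qed
  show ?thesis
  proof (rule idealI)
    show "ring R" by (rule ring_axioms)
    show "subgroup I (add_monoid R)"
      using s z a neg by (intro add.subgroupI) (auto simp: a_inv_def)
    show "x \<otimes> b \<in> I" if "b \<in> I" "x \<in> carrier R" for b x using m that by blast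
    show "b \<otimes> x \<in> I" if "b \<in> I" "x \<in> carrier R" for b x using m that s m_comm by (metis subsetD)
  qed
qed

lemma noeth_chain:
  fixes J :: "nat \<Rightarrow> 'a set"
  assumes R: "noetherian_ring R" and id: "\<And>k. ideal (J k) R" and mn: "\<And>i j. i \<le> j \<Longrightarrow> J i \<subseteq> J j"
  shows "\<exists>k0. \<forall>k. J k \<subseteq> J k0"
proof -
  interpret noetherian_ring R by fact
  have "\<Union>(range J) \<in> range J"
  proof (rule ideal_chain_is_trivial)
    show "range J \<noteq> {}" by simp
    show "subset.chain {I. ideal I R} (range J)"
    proof -
      have "J i \<subseteq> J j \<or> J j \<subseteq> J i" for i j using nat_le_linear[of i j] mn[of i j] mn[of j i] by blast
      then show ?thesis unfolding pred_on.chain_def using id by (auto simp: subset_iff_psubset_eq)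
    qed
  qed
  then obtain k0 where "\<Union>(range J) = J k0" by auto
  then show ?thesis by auto
qed

lemma rann_mono:
  fixes R :: "'a ring" (structure)
  assumes R: "ring R" and sub: "max_ideal R \<subseteq> carrier R" and r: "r \<in> carrier R"
    and a: "rann R k r" and kj: "k \<le> j"
  shows "rann R j r"
  unfolding rann_def
proof (intro allI impI)
  interpret ring R by fact
  fix as assume as: "length as = j \<and> set as \<subseteq> max_ideal R"
  define bs where "bs = take (j - k) as"
  define cs where "cs = drop (j - k) as"
  have asd: "as = bs @ cs" by (simp add: bs_def cs_def)
  have bsm: "set bs \<subseteq> max_ideal R" using as unfolding bs_def by (auto dest: in_set_takeD)
  have csm: "length cs = k" "set cs \<subseteq> max_ideal R" using as kj unfolding cs_def by (auto dest: in_set_dropD)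
  have bsc: "set bs \<subseteq> carrier R" "set cs \<subseteq> carrier R" using bsm csm sub by auto
  have c0: "lprod R cs \<otimes> r = \<zero>" using a csm by (simp add: rann_def)
  have "lprod R as \<otimes> r = lprod R bs \<otimes> (lprod R cs \<otimes> r)"
    using asd lprod_append[OF ring_axioms bsc] lprod_closed[OF ring_axioms] bsc r
    by (simp add: m_assoc)
  then show "lprod R as \<otimes> r = \<zero>" using c0 lprod_closed[OF ring_axioms] bsc by simp
qed

lemma exists_b0:
  fixes R :: "'a ring" (structure)
  assumes L: "local_ring R"
  shows "\<exists>b0. \<forall>k r. r \<in> carrier R \<longrightarrow> rann R k r \<longrightarrow> rann R b0 r"
proof -
  have cr: "cring R" and nr: "noetherian_ring R" using L by (auto simp: local_ring_def)
  interpret cring R by fact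
  have sub: "max_ideal R \<subseteq> carrier R" by (rule local_max_sub[OF L])
  define J where "J k = {r \<in> carrier R. rann R k r}" for k
  have pc: "set as \<subseteq> max_ideal R \<Longrightarrow> lprod R as \<in> carrier R" for as
    using lprod_mem[OF ring_axioms sub] by blast
  have "ideal (J k) R" for k
  proof (rule ideal_closure[OF cr])
    show "J k \<subseteq> carrier R" by (auto simp: J_def)
    show "\<zero> \<in> J k" using pc by (auto simp: J_def rann_def)
    show "a \<oplus> b \<in> J k" if "a \<in> J k" "b \<in> J k" for a b
      using that pc by (auto simp: J_def rann_def r_distr)
    show "r \<otimes> a \<in> J k" if "r \<in> carrier R" "a \<in> J k" for r a
    proof -
      have "lprod R as \<otimes> (r \<otimes> a) = r \<otimes> (lprod R as \<otimes> a)" if "set as \<subseteq> max_ideal R" for as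
        using pc[OF that] \<open>r \<in> carrier R\<close> \<open>a \<in> J k\<close> by (simp add: J_def m_lcomm)
      then show ?thesis using that by (auto simp: J_def rann_def)
    qed
  qed
  moreover have "i \<le> j \<Longrightarrow> J i \<subseteq> J j" for i j
    using rann_mono[OF ring_axioms sub] by (auto simp: J_def)
  ultimately obtain k0 where "\<forall>k. J k \<subseteq> J k0" using noeth_chain[OF nr] by blast
  then show ?thesis by (auto simp: J_def)
qed




fun span :: "'a ring \<Rightarrow> ('a,'b) module \<Rightarrow> 'b list \<Rightarrow> 'b set" where
  "span R M [] = {\<zero>\<^bsub>M\<^esub>}"
| "span R M (x # ys) = {r \<odot>\<^bsub>M\<^esub> x \<oplus>\<^bsub>M\<^esub> c | r c. r \<in> carrier R \<and> c \<in> span R M ys}"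

definition subm :: "'a ring \<Rightarrow> ('a,'b) module \<Rightarrow> 'b set \<Rightarrow> bool" where
  "subm R M S \<longleftrightarrow> S \<subseteq> carrier M \<and> \<zero>\<^bsub>M\<^esub> \<in> S \<and> (\<forall>a\<in>S. \<forall>b\<in>S. a \<oplus>\<^bsub>M\<^esub> b \<in> S)
     \<and> (\<forall>r\<in>carrier R. \<forall>a\<in>S. r \<odot>\<^bsub>M\<^esub> a \<in> S)"

lemma subm_minus:
  assumes M: "module R M" and S: "subm R M S" and a: "a \<in> S" and b: "b \<in> S"
  shows "a \<ominus>\<^bsub>M\<^esub> b \<in> S"
proof -
  interpret module R M by fact
  have bc: "b \<in> carrier M" using S b by (auto simp: subm_def)
  have "\<ominus>\<^bsub>M\<^esub> b = (\<ominus>\<^bsub>R\<^esub> \<one>\<^bsub>R\<^esub>) \<odot>\<^bsub>M\<^esub> b" using bc by (simp add: smult_l_minus)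
  also have "\<dots> \<in> S" using S b by (auto simp: subm_def)
  finally show ?thesis using S a by (auto simp: subm_def M.minus_eq)
qed

lemma span_subm:
  assumes M: "module R M" and xs: "set xs \<subseteq> carrier M"
  shows "subm R M (span R M xs)"
  using xs
proof (induction xs)
  case Nil
  interpret module R M by fact
  show ?case by (simp add: subm_def)
next
  case (Cons x ys)
  interpret module R M by fact
  have IH: "subm R M (span R M ys)" and x: "x \<in> carrier M" using Cons by auto
  have sc: "span R M ys \<subseteq> carrier M" using IH by (simp add: subm_def)
  show ?case unfolding subm_def
  proof (intro conjI ballI)
    show "span R M (x # ys) \<subseteq> carrier M" using sc x by auto
    have "\<zero>\<^bsub>M\<^esub> = \<zero>\<^bsub>R\<^esub> \<odot>\<^bsub>M\<^esub> x \<oplus>\<^bsub>M\<^esub> \<zero>\<^bsub>M\<^esub>" using x by simp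
    then show "\<zero>\<^bsub>M\<^esub> \<in> span R M (x # ys)" using IH by (auto simp: subm_def)
  next
    fix a b assume a: "a \<in> span R M (x # ys)" and b: "b \<in> span R M (x # ys)"
    then obtain r c s d where r: "r \<in> carrier R" "c \<in> span R M ys" "a = r \<odot>\<^bsub>M\<^esub> x \<oplus>\<^bsub>M\<^esub> c"
      and s: "s \<in> carrier R" "d \<in> span R M ys" "b = s \<odot>\<^bsub>M\<^esub> x \<oplus>\<^bsub>M\<^esub> d" by auto
    have cd: "c \<in> carrier M" "d \<in> carrier M" using r s sc by auto
    have "a \<oplus>\<^bsub>M\<^esub> b = (r \<oplus>\<^bsub>R\<^esub> s) \<odot>\<^bsub>M\<^esub> x \<oplus>\<^bsub>M\<^esub> (c \<oplus>\<^bsub>M\<^esub> d)"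
      using r s cd x by (simp add: smult_l_distr M.a_ac)
    moreover have "c \<oplus>\<^bsub>M\<^esub> d \<in> span R M ys" using IH r s by (simp add: subm_def)
    ultimately show "a \<oplus>\<^bsub>M\<^esub> b \<in> span R M (x # ys)" using r s by auto
  next
    fix t a assume t: "t \<in> carrier R" and a: "a \<in> span R M (x # ys)"
    then obtain r c where r: "r \<in> carrier R" "c \<in> span R M ys" "a = r \<odot>\<^bsub>M\<^esub> x \<oplus>\<^bsub>M\<^esub> c" by auto
    have cc: "c \<in> carrier M" using r sc by auto
    have "t \<odot>\<^bsub>M\<^esub> a = (t \<otimes>\<^bsub>R\<^esub> r) \<odot>\<^bsub>M\<^esub> x \<oplus>\<^bsub>M\<^esub> t \<odot>\<^bsub>M\<^esub> c"
      using r t cc x by (simp add: smult_r_distr smult_assoc1)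
    moreover have "t \<odot>\<^bsub>M\<^esub> c \<in> span R M ys" using IH r t by (simp add: subm_def)
    ultimately show "t \<odot>\<^bsub>M\<^esub> a \<in> span R M (x # ys)" using r t by auto
  qed
qed

lemma in_span:
  assumes M: "module R M" and xs: "set xs \<subseteq> carrier M" and x: "x \<in> set xs"
  shows "x \<in> span R M xs"
  using xs x
proof (induction xs)
  case Nil then show ?case by simp
next
  case (Cons y ys)
  interpret module R M by fact
  have yc: "y \<in> carrier M" using Cons by simp
  show ?case
  proof (cases "x = y")
    case True
    have "x = \<one>\<^bsub>R\<^esub> \<odot>\<^bsub>M\<^esub> y \<oplus>\<^bsub>M\<^esub> \<zero>\<^bsub>M\<^esub>" using True yc by simp
    moreover have "\<zero>\<^bsub>M\<^esub> \<in> span R M ys" using span_subm[OF M] Cons by (simp add: subm_def)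
    ultimately show ?thesis by force
  next
    case False
    then have xs: "x \<in> span R M ys" using Cons by simp
    then have "x \<in> carrier M" using span_subm[OF M] Cons by (auto simp: subm_def)
    then have "x = \<zero>\<^bsub>R\<^esub> \<odot>\<^bsub>M\<^esub> y \<oplus>\<^bsub>M\<^esub> x" using yc by simp
    then show ?thesis using xs by force
  qed
qed

lemma finsum_subm:
  assumes M: "module R M" and S: "subm R M S" and fin: "finite A" and f: "\<forall>i\<in>A. f i \<in> S"
  shows "finsum M f A \<in> S"
  using fin f
proof (induction A rule: finite_induct)
  case empty
  interpret module R M by fact
  show ?case using S by (simp add: subm_def)
next
  case (insert a A)
  interpret module R M by fact
  have sc: "S \<subseteq> carrier M" using S by (simp add: subm_def)
  have "finsum M f (insert a A) = f a \<oplus>\<^bsub>M\<^esub> finsum M f A"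
    using insert sc by (intro M.finsum_insert) auto
  then show ?case using insert S by (auto simp: subm_def)
qed

lemma fg_span:
  assumes fg: "fg_mod R M"
  shows "\<exists>xs. set xs \<subseteq> carrier M \<and> carrier M \<subseteq> span R M xs"
proof -
  have M: "module R M" using fg by (simp add: fg_mod_def)
  interpret module R M by fact
  obtain xs where xs: "set xs \<subseteq> carrier M" and gen: "\<forall>m\<in>carrier M. \<exists>cs. length cs = length xs \<and> set cs \<subseteq> carrier R
        \<and> m = finsum M (\<lambda>i. (cs ! i) \<odot>\<^bsub>M\<^esub> (xs ! i)) {..<length xs}"
    using fg by (auto simp: fg_mod_def)
  have S: "subm R M (span R M xs)" by (rule span_subm[OF M xs])
  have "m \<in> span R M xs" if m: "m \<in> carrier M" for m
  proof -
    obtain cs where cs: "length cs = length xs" "set cs \<subseteq> carrier R"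
      and me: "m = finsum M (\<lambda>i. (cs ! i) \<odot>\<^bsub>M\<^esub> (xs ! i)) {..<length xs}" using gen m by blast
    have "\<forall>i\<in>{..<length xs}. (cs ! i) \<odot>\<^bsub>M\<^esub> (xs ! i) \<in> span R M xs"
    proof
      fix i assume i: "i \<in> {..<length xs}"
      then have "xs ! i \<in> span R M xs" using in_span[OF M xs] by simp
      moreover have "cs ! i \<in> carrier R" using cs i by (auto dest: nth_mem)
      ultimately show "(cs ! i) \<odot>\<^bsub>M\<^esub> (xs ! i) \<in> span R M xs" using S by (simp add: subm_def)
    qed
    then show ?thesis unfolding me by (rule finsum_subm[OF M S finite_lessThan])
  qed
  then show ?thesis using xs by blast
qed




lemma (in abelian_group) diff_cancel:
  assumes "c \<in> carrier G" "d \<in> carrier G" "a \<in> carrier G"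
  shows "(a \<oplus> c) \<ominus> (a \<oplus> d) = c \<ominus> d"
proof -
  have "(a \<oplus> c) \<ominus> (a \<oplus> d) = (a \<oplus> c) \<oplus> (\<ominus> a \<oplus> \<ominus> d)"
    using assms by (simp add: minus_eq minus_add)
  also have "\<dots> = (a \<oplus> \<ominus> a) \<oplus> (c \<oplus> \<ominus> d)" using assms by (simp add: a_ac)
  also have "\<dots> = c \<ominus> d" using assms by (simp add: r_neg minus_eq)
  finally show ?thesis .
qed

lemma acc_span:
  fixes N :: "nat \<Rightarrow> 'b set"
  assumes R: "noetherian_ring R" and M: "module R M" and xs: "set xs \<subseteq> carrier M"
    and S: "\<And>k. subm R M (N k)" and mn: "\<And>i j. i \<le> j \<Longrightarrow> N i \<subseteq> N j"
    and sp: "\<And>k. N k \<subseteq> span R M xs"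
  shows "\<exists>k0. \<forall>k\<ge>k0. N k = N k0"
  using xs S mn sp
proof (induction xs arbitrary: N)
  case Nil
  interpret module R M by fact
  have "N k = {\<zero>\<^bsub>M\<^esub>}" for k using Nil(2)[of k] Nil(4)[of k] by (auto simp: subm_def)
  then show ?case by auto
next
  case (Cons x ys)
  interpret module R M by fact
  have x: "x \<in> carrier M" and ys: "set ys \<subseteq> carrier M" using Cons.prems by auto
  have Sy: "subm R M (span R M ys)" by (rule span_subm[OF M ys])
  have syc: "span R M ys \<subseteq> carrier M" using Sy by (simp add: subm_def)
  define I where "I k = {r \<in> carrier R. \<exists>c\<in>span R M ys. r \<odot>\<^bsub>M\<^esub> x \<oplus>\<^bsub>M\<^esub> c \<in> N k}" for k
  have Sk: "subm R M (N k)" for k by (rule Cons.prems(2))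
  have idl: "ideal (I k) R" for k
  proof (rule ideal_closure[OF is_cring])
    show "I k \<subseteq> carrier R" by (auto simp: I_def)
    have "\<zero>\<^bsub>R\<^esub> \<odot>\<^bsub>M\<^esub> x \<oplus>\<^bsub>M\<^esub> \<zero>\<^bsub>M\<^esub> \<in> N k" using x Sk[of k] by (simp add: subm_def)
    then show "\<zero>\<^bsub>R\<^esub> \<in> I k" using Sy by (auto simp: I_def subm_def)
  next
    fix a b assume a: "a \<in> I k" and b: "b \<in> I k"
    then obtain c d where ac: "a \<in> carrier R" "c \<in> span R M ys" "a \<odot>\<^bsub>M\<^esub> x \<oplus>\<^bsub>M\<^esub> c \<in> N k"
      and bd: "b \<in> carrier R" "d \<in> span R M ys" "b \<odot>\<^bsub>M\<^esub> x \<oplus>\<^bsub>M\<^esub> d \<in> N k" by (auto simp: I_def)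
    have cd: "c \<in> carrier M" "d \<in> carrier M" using ac bd syc by auto
    have "(a \<odot>\<^bsub>M\<^esub> x \<oplus>\<^bsub>M\<^esub> c) \<oplus>\<^bsub>M\<^esub> (b \<odot>\<^bsub>M\<^esub> x \<oplus>\<^bsub>M\<^esub> d) = (a \<oplus>\<^bsub>R\<^esub> b) \<odot>\<^bsub>M\<^esub> x \<oplus>\<^bsub>M\<^esub> (c \<oplus>\<^bsub>M\<^esub> d)"
      using ac bd cd x by (simp add: smult_l_distr M.a_ac)
    moreover have "(a \<odot>\<^bsub>M\<^esub> x \<oplus>\<^bsub>M\<^esub> c) \<oplus>\<^bsub>M\<^esub> (b \<odot>\<^bsub>M\<^esub> x \<oplus>\<^bsub>M\<^esub> d) \<in> N k"
      using ac bd Sk[of k] by (simp add: subm_def)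
    moreover have "c \<oplus>\<^bsub>M\<^esub> d \<in> span R M ys" using Sy ac bd by (simp add: subm_def)
    ultimately show "a \<oplus>\<^bsub>R\<^esub> b \<in> I k" using ac bd by (auto simp: I_def)
  next
    fix t a assume t: "t \<in> carrier R" and a: "a \<in> I k"
    then obtain c where ac: "a \<in> carrier R" "c \<in> span R M ys" "a \<odot>\<^bsub>M\<^esub> x \<oplus>\<^bsub>M\<^esub> c \<in> N k"
      by (auto simp: I_def)
    have cc: "c \<in> carrier M" using ac syc by auto
    have "t \<odot>\<^bsub>M\<^esub> (a \<odot>\<^bsub>M\<^esub> x \<oplus>\<^bsub>M\<^esub> c) = (t \<otimes>\<^bsub>R\<^esub> a) \<odot>\<^bsub>M\<^esub> x \<oplus>\<^bsub>M\<^esub> t \<odot>\<^bsub>M\<^esub> c"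
      using ac t cc x by (simp add: smult_r_distr smult_assoc1)
    moreover have "t \<odot>\<^bsub>M\<^esub> (a \<odot>\<^bsub>M\<^esub> x \<oplus>\<^bsub>M\<^esub> c) \<in> N k" using ac t Sk[of k] by (simp add: subm_def)
    moreover have "t \<odot>\<^bsub>M\<^esub> c \<in> span R M ys" using Sy ac t by (simp add: subm_def)
    ultimately show "t \<otimes>\<^bsub>R\<^esub> a \<in> I k" using ac t by (auto simp: I_def)
  qed
  have Imn: "I i \<subseteq> I j" if "i \<le> j" for i j using Cons.prems(3)[OF that] by (auto simp: I_def)
  obtain k1 where k1: "\<forall>k. I k \<subseteq> I k1" using noeth_chain[where J=I, OF R idl Imn] by blast
  define N' where "N' k = N k \<inter> span R M ys" for k
  have "\<exists>k0. \<forall>k\<ge>k0. N' k = N' k0"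
  proof (rule Cons.IH[OF ys])
    show "subm R M (N' k)" for k using Sk[of k] Sy by (auto simp: subm_def N'_def)
    show "N' i \<subseteq> N' j" if "i \<le> j" for i j using Cons.prems(3)[OF that] by (auto simp: N'_def)
    show "N' k \<subseteq> span R M ys" for k by (auto simp: N'_def)
  qed
  then obtain k2 where k2: "\<forall>k\<ge>k2. N' k = N' k2" by blast
  define k0 where "k0 = max k1 k2"
  have "N k = N k0" if kk: "k \<ge> k0" for k
  proof
    show "N k0 \<subseteq> N k" using Cons.prems(3)[OF kk] .
    show "N k \<subseteq> N k0"
    proof
      fix z assume z: "z \<in> N k"
      then have "z \<in> span R M (x # ys)" using Cons.prems(4) by blast
      then obtain r c where r: "r \<in> carrier R" and c: "c \<in> span R M ys" and ze: "z = r \<odot>\<^bsub>M\<^esub> x \<oplus>\<^bsub>M\<^esub> c" by auto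
      have "r \<in> I k" using r c z ze by (auto simp: I_def)
      then have "r \<in> I k1" using k1 by blast
      then have "r \<in> I k0" using Imn[of k1 k0] by (auto simp: k0_def)
      then obtain c' where c': "c' \<in> span R M ys" and w: "r \<odot>\<^bsub>M\<^esub> x \<oplus>\<^bsub>M\<^esub> c' \<in> N k0" by (auto simp: I_def)
      let ?w = "r \<odot>\<^bsub>M\<^esub> x \<oplus>\<^bsub>M\<^esub> c'"
      have cc: "c \<in> carrier M" "c' \<in> carrier M" using c c' syc by auto
      have rx: "r \<odot>\<^bsub>M\<^esub> x \<in> carrier M" using r x by simp
      have wk: "?w \<in> N k" using w Cons.prems(3)[OF kk] by blast
      have d: "z \<ominus>\<^bsub>M\<^esub> ?w = c \<ominus>\<^bsub>M\<^esub> c'"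
        unfolding ze using cc rx by (rule diff_cancel)
      have "c \<ominus>\<^bsub>M\<^esub> c' \<in> span R M ys" by (rule subm_minus[OF M Sy c c'])
      moreover have "z \<ominus>\<^bsub>M\<^esub> ?w \<in> N k" by (rule subm_minus[OF M Sk z wk])
      ultimately have "z \<ominus>\<^bsub>M\<^esub> ?w \<in> N' k" using d by (simp add: N'_def)
      also have "N' k = N' k2" using k2 kk unfolding k0_def by (meson max.boundedE)
      also have "\<dots> = N' k0" using k2 unfolding k0_def by (metis max.cobounded2)
      finally have d0: "z \<ominus>\<^bsub>M\<^esub> ?w \<in> N k0" by (simp add: N'_def)
      have zc: "z \<in> carrier M" using ze cc rx by simp
      have wc: "?w \<in> carrier M" using cc rx by simp
      have "z = (z \<ominus>\<^bsub>M\<^esub> ?w) \<oplus>\<^bsub>M\<^esub> ?w" using zc wc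
        by (simp add: M.minus_eq M.a_assoc M.l_neg)
      also have "\<dots> \<in> N k0" using d0 w Sk[of k0] by (simp add: subm_def)
      finally show "z \<in> N k0" .
    qed
  qed
  then show ?case by blast
qed

lemma fg_bnd:
  assumes L: "local_ring R" and fg: "fg_mod R C"
  shows "\<exists>b. bnd R C b"
proof -
  have C: "module R C" using fg by (simp add: fg_mod_def)
  interpret module R C by fact
  have nr: "noetherian_ring R" using L by (simp add: local_ring_def)
  have sub: "max_ideal R \<subseteq> carrier R" by (rule local_max_sub[OF L])
  obtain xs where xs: "set xs \<subseteq> carrier C" and sp: "carrier C \<subseteq> span R C xs" using fg_span[OF fg] by blast
  define N where "N k = {x \<in> carrier C. ann_pow R C k x}" for k
  have pc: "set as \<subseteq> max_ideal R \<Longrightarrow> lprod R as \<in> carrier R" for as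
    using lprod_mem[OF ring_axioms sub] by blast
  have S: "subm R C (N k)" for k unfolding subm_def
  proof (intro conjI ballI)
    show "N k \<subseteq> carrier C" by (auto simp: N_def)
    show "\<zero>\<^bsub>C\<^esub> \<in> N k" using pc by (auto simp: N_def ann_pow_lprod)
    show "a \<oplus>\<^bsub>C\<^esub> b \<in> N k" if "a \<in> N k" "b \<in> N k" for a b
      using that pc by (auto simp: N_def ann_pow_lprod smult_r_distr)
    show "r \<odot>\<^bsub>C\<^esub> a \<in> N k" if r: "r \<in> carrier R" and a: "a \<in> N k" for r a
    proof -
      have "lprod R as \<odot>\<^bsub>C\<^esub> (r \<odot>\<^bsub>C\<^esub> a) = r \<odot>\<^bsub>C\<^esub> (lprod R as \<odot>\<^bsub>C\<^esub> a)" if "set as \<subseteq> max_ideal R" for as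
        using pc[OF that] r a by (simp add: N_def smult_assoc1[symmetric] R.m_comm)
      then show ?thesis using r a by (auto simp: N_def ann_pow_lprod)
    qed
  qed
  have mn: "N i \<subseteq> N j" if "i \<le> j" for i j using ann_pow_mono[OF C sub _ _ that] by (auto simp: N_def)
  obtain k0 where k0: "\<forall>k\<ge>k0. N k = N k0"
    using acc_span[where N=N, OF nr C xs S mn] sp by (auto simp: N_def)
  have "bnd R C k0" unfolding bnd_def
  proof
    fix x assume "x \<in> gamma_m R C"
    then obtain k where xc: "x \<in> carrier C" and k: "ann_pow R C k x" by (auto simp: gamma_m_def)
    show "ann_pow R C k0 x"
    proof (cases "k \<le> k0")
      case True then show ?thesis using ann_pow_mono[OF C sub xc k] by simp
    next
      case False
      then have "x \<in> N k" using xc k by (simp add: N_def)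
      moreover have "N k = N k0" using k0[rule_format, of k] False by linarith
      ultimately have "x \<in> N k0" by simp
      then show ?thesis by (simp add: N_def)
    qed
  qed
  then show ?thesis by blast
qed




lemma bnd_mono:
  assumes M: "module R M" and sub: "max_ideal R \<subseteq> carrier R" and b: "bnd R M b" and bb: "b \<le> b'"
  shows "bnd R M b'"
  using b ann_pow_mono[OF M sub _ _ bb] unfolding bnd_def gamma_m_def by auto

lemma fg_module: "fg_mod R M \<Longrightarrow> module R M" by (simp add: fg_mod_def)

lemma bnd_via_free:
  assumes N: "module R N" and sub: "max_ideal R \<subseteq> carrier R"
    and f: "modhom R N (free_mod R m) f" and inj: "inj_on f (carrier N)"
    and bz: "\<And>k r. r \<in> carrier R \<Longrightarrow> rann R k r \<Longrightarrow> rann R bz r"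
  shows "bnd R N bz"
  by (rule bnd_transfer[OF N sub f inj modhom_zero_free[OF N f] free_bnd[OF bz]])

lemma modhom_kernel:
  assumes "modhom R N (kernel_mod F Z g) f"
  shows "modhom R N F f"
  using assms unfolding modhom_def kernel_mod_def by (auto simp: Pi_iff)

lemma bracket_bnd:
  fixes R :: "'a ring"
  assumes L: "local_ring R"
    and bz: "\<And>k r. r \<in> carrier R \<Longrightarrow> rann R k r \<Longrightarrow> rann R bz r" and Bb: "bz \<le> B"
    and S: "\<And>X. X \<in> S \<Longrightarrow> module R X \<and> bnd R X B"
  shows "M \<in> bracket R S \<Longrightarrow> module R M \<and> bnd R M B"
proof -
  assume Mb: "M \<in> bracket R S"
  have sub: "max_ideal R \<subseteq> carrier R" by (rule local_max_sub[OF L])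
  have gen: "module R N \<and> bnd R N B"
    if N: "N \<in> {N. fg_mod R N \<and> mod_iso R N (free_mod R 1)} \<union> {N. \<exists>i X. X \<in> S \<and> syz R i X N}" for N
  proof -
    have fr: "bnd R N B" if Nm: "module R N" and f: "modhom R N (free_mod R m) f" and inj: "inj_on f (carrier N)" for m f
      using bnd_mono[OF Nm sub bnd_via_free[OF Nm sub f inj bz] Bb] .
    from N show ?thesis
    proof
      assume "N \<in> {N. fg_mod R N \<and> mod_iso R N (free_mod R 1)}"
      then have Nm: "module R N" and "mod_iso R N (free_mod R 1)" by (auto simp: fg_mod_def)
      then obtain f where "modhom R N (free_mod R 1) f" "inj_on f (carrier N)"
        by (auto simp: mod_iso_def bij_betw_def)
      then show ?thesis using fr Nm by blast
    next
      assume "N \<in> {N. \<exists>i X. X \<in> S \<and> syz R i X N}"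
      then obtain i X where X: "X \<in> S" and sz: "syz R i X N" by blast
      show ?thesis
      proof (cases i)
        case 0
        then have Nm: "module R N" and iso: "mod_iso R N X" using sz by (auto simp: fg_mod_def)
        then obtain f where f: "modhom R N X f" and inj: "inj_on f (carrier N)"
          by (auto simp: mod_iso_def bij_betw_def)
        have Xm: "module R X" and bX: "bnd R X B" using S[OF X] by auto
        show ?thesis using bnd_transfer[OF Nm sub f inj modhom_zero[OF Nm Xm f] bX] Nm by blast
      next
        case (Suc j)
        have Nm: "module R N" using sz Suc by (auto simp: fg_mod_def)
        obtain Z :: "'a umod" where s1: "syz1 R Z N" using sz Suc by auto
        then obtain g where "mod_iso R N (kernel_mod (free_mod R (num_gens R Z)) Z g)"
          by (auto simp: syz1_def)
        then obtain f where f: "modhom R N (kernel_mod (free_mod R (num_gens R Z)) Z g) f"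
          and inj: "inj_on f (carrier N)"
          by (auto simp: mod_iso_def bij_betw_def)
        show ?thesis using fr[OF Nm modhom_kernel[OF f] inj] Nm by blast
      qed
    qed
  qed
  from Mb obtain n and N :: "nat \<Rightarrow> 'a umod" and \<iota> \<pi> where fg: "fg_mod R M"
    and Nk: "\<forall>k<n. N k \<in> {N. fg_mod R N \<and> mod_iso R N (free_mod R 1)} \<union> {N. \<exists>i X. X \<in> S \<and> syz R i X N}
       \<and> modhom R M (N k) (\<iota> k) \<and> modhom R (N k) M (\<pi> k)"
    and s: "\<forall>x\<in>carrier M. finsum M (\<lambda>k. \<pi> k (\<iota> k x)) {..<n} = x"
    unfolding bracket_def add_closure_def by blast
  have Mm: "module R M" using fg by (simp add: fg_mod_def)
  have "bnd R M B"
  proof (rule bnd_summand[where N=N and \<iota>=\<iota> and \<pi>=\<pi> and n=n, OF Mm sub])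
    show "\<forall>x\<in>carrier M. finsum M (\<lambda>k. \<pi> k (\<iota> k x)) {..<n} = x" by (rule s)
    fix k assume "k < n"
    then show "module R (N k) \<and> bnd R (N k) B \<and> modhom R M (N k) (\<iota> k) \<and> modhom R (N k) M (\<pi> k)"
      using Nk gen by blast
  qed
  then show ?thesis using Mm by blast
qed

lemma circ_bnd:
  assumes sub: "max_ideal R \<subseteq> carrier R"
    and A: "\<And>X. X \<in> A \<Longrightarrow> module R X \<and> bnd R X b1"
    and B: "\<And>X. X \<in> B \<Longrightarrow> module R X \<and> bnd R X b2"
    and M: "M \<in> circ R A B"
  shows "module R M \<and> bnd R M (b1 + b2)"
proof -
  from M obtain X Y f g where fg: "fg_mod R M" and X: "X \<in> A" and Y: "Y \<in> B" and se: "short_exact R X M Y f g"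
    by (auto simp: circ_def)
  have Mm: "module R M" using fg by (simp add: fg_mod_def)
  show ?thesis using bnd_ext[OF _ Mm _ sub se] A[OF X] B[OF Y] Mm by blast
qed

lemma ball_bnd:
  fixes R :: "'a ring" and C M :: "'a umod"
  assumes L: "local_ring R"
    and bz: "\<And>k r. r \<in> carrier R \<Longrightarrow> rann R k r \<Longrightarrow> rann R bz r" and Bb: "bz \<le> B"
    and C: "module R C" "bnd R C B"
  shows "M \<in> ball R C r \<Longrightarrow> module R M \<and> bnd R M (Suc r * B)"
proof (induction r arbitrary: M)
  case 0
  have "module R M \<and> bnd R M B"
    by (rule bracket_bnd[OF L bz Bb _ 0[simplified]]) (use C in auto)
  then show ?case by simp
next
  case (Suc r)
  have sub: "max_ideal R \<subseteq> carrier R" by (rule local_max_sub[OF L])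
  have br: "\<And>X. X \<in> bracket R {C} \<Longrightarrow> module R X \<and> bnd R X B"
    by (rule bracket_bnd[OF L bz Bb]) (use C in auto)
  have ci: "\<And>X. X \<in> circ R (ball R C r) (bracket R {C}) \<Longrightarrow> module R X \<and> bnd R X (Suc r * B + B)"
    by (rule circ_bnd[OF sub Suc.IH br])
  have "bz \<le> Suc r * B + B" using Bb by simp
  have Mb: "M \<in> bracket R (circ R (ball R C r) (bracket R {C}))" using Suc.prems by simp
  have "module R M \<and> bnd R M (Suc r * B + B)"
    by (rule bracket_bnd[OF L bz \<open>bz \<le> Suc r * B + B\<close> ci Mb])
  then show ?case by (simp add: add.commute)
qed

theorem proposition4p3:
  fixes R :: "'a ring" and \<X> :: "'a umod set"
  assumes "local_ring R"
    and "resolving R \<X>"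
    and "radius R \<X> < \<infinity>"
  shows "(SUP X\<in>\<X>. loewy_length R X (gamma_m R X)) < \<infinity>"
proof -
  note L = assms(1)
  have sub: "max_ideal R \<subseteq> carrier R" by (rule local_max_sub[OF L])
  obtain bz where bz: "\<And>k r. r \<in> carrier R \<Longrightarrow> rann R k r \<Longrightarrow> rann R bz r"
    using exists_b0[OF L] by blast
  have "{n. \<exists>C. fg_mod R C \<and> \<X> \<subseteq> ball R C n} \<noteq> {}"
  proof
    assume eq: "{n. \<exists>C. fg_mod R C \<and> \<X> \<subseteq> ball R C n} = {}"
    have "radius R \<X> = (INF n\<in>{}. enat n)" unfolding radius_def by (simp only: eq)
    then have "radius R \<X> = \<infinity>" by (simp add: top_enat_def)
    then show False using assms(3) by simp
  qed
  then obtain n C where C: "fg_mod R C" and XC: "\<X> \<subseteq> ball R C n" by blast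
  obtain bC where bC: "bnd R C bC" using fg_bnd[OF L C] by blast
  define B where "B = max bC bz"
  have Cm: "module R C" using C by (simp add: fg_mod_def)
  have CB: "bnd R C B" using bnd_mono[OF Cm sub bC] by (simp add: B_def)
  have Bb: "bz \<le> B" by (simp add: B_def)
  have le: "loewy_length R X (gamma_m R X) \<le> enat (Suc n * B)" if X: "X \<in> \<X>" for X
  proof -
    have "module R X \<and> bnd R X (Suc n * B)"
    proof (rule ball_bnd[where M=X and r=n and C=C and B=B])
      show "local_ring R" by (rule L)
      show "\<And>k r. r \<in> carrier R \<Longrightarrow> rann R k r \<Longrightarrow> rann R bz r" by (rule bz)
      show "bz \<le> B" by (rule Bb)
      show "module R C" by (rule Cm)
      show "bnd R C B" by (rule CB)
      show "X \<in> ball R C n" using X XC by blast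
    qed
    then have "bnd R X (Suc n * B)" by blast
    then have "Suc n * B \<in> {n. \<forall>x\<in>gamma_m R X. ann_pow R X n x}" by (simp add: bnd_def)
    then show ?thesis unfolding loewy_length_def by (rule INF_lower)
  qed
  have "(SUP X\<in>\<X>. loewy_length R X (gamma_m R X)) \<le> enat (Suc n * B)"
    by (rule SUP_least) (rule le)
  then show ?thesis by (rule le_less_trans) simp
qed


end
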